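(* Let $d:E\to\mathbb{Z}_{>0}$ be a positive integer edge cost, $M$ a positive integer, and $e_0\in E$ an edge with $d(e_0)$ even. Define $d_1:E\to\mathbb{Z}_+$ by $d_1(e_0)=d(e_0)-1$ and $d_1(e)=d(e)$ for $e\neq e_0$. If $p\in\mathbb{G}^n$ is a minimizer of $h_{d,M}$, then there exists a minimizer $q\in\mathbb{G}^n$ of $h_{d_1,M}$ with $\|p-q\|\le 2$.
   Context: Network: simple undirected graph $(V,E)$, $V=\{1,\dots,n\}$, terminals $S=\{1,\dots,k\}\subseteq V$, $k\ge3$, no edge between two terminals, node capacities $c:V\setminus S\to\mathbb{Z}_+$. Grid: the infinite $k$-star $\mathbb{T}$ is $\mathbb{R}_+\times\{1,\dots,k\}$ with all $(0,s)$ identified to a point $0$; $(x,s)$ is also written $x$; $\mathrm{dist}((x,s),(x',s'))=|x-x'|$ if $s=s'$, $x+x'$ otherwise. $x$ is integral if $\mathrm{dist}(x,0)\in\mathbb{Z}$, proper half-integral if $2\mathrm{dist}(x,0)\in\mathbb{Z}$ but $\mathrm{dist}(x,0)\notin\mathbb{Z}$. $\mathbb{G}\subseteq\mathbb{T}\times\mathbb{R}$ is the set of $(x,y)$ with $x,y$ both integral or both proper half-integral. For $(x,y),(x',y')$ put $\|(x,y)-(x',y')\|=\mathrm{dist}(x,x')+|y-y'|$, and for $p,q\in\mathbb{G}^n$, $\|p-q\|=\max_i\|p_i-q_i\|$. Potential for $d$ and $M$: $(x,y)=((x_1,y_1),\dots,(x_n,y_n))\in\mathbb{G}^n$ with $\mathrm{dist}(x_i,x_j)-y_i-y_j\le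 2d(ij)$ for all $ij\in E$, $(x_s,y_s)=((M,s),0)$ for $s\in S$, $y_i\ge0$ and $\mathrm{dist}(0,x_i)\le M$ for all $i\in V$. $h_{d,M}(x,y)=\sum_{i\in V\setminus S}c_iy_i$ if $(x,y)$ is a potential for $d$ and $M$, and $+\infty$ otherwise. *)

theory Defs
  imports Complex_Main "HOL-Library.Extended_Real"
begin

text \<open>A point of the infinite k-star T is represented canonically as a pair (r, s) with
  r \<ge> 0 the distance to the centre 0 and s \<in> {1..k} the ray; the centre 0 (where all
  rays are identified) is represented only by (0, 1).\<close>

type_synonym star_pt = "real \<times> nat"

definition in_star :: "nat \<Rightarrow> star_pt \<Rightarrow> bool" where
  "in_star k x \<longleftrightarrow> fst x \<ge> 0 \<and> snd x \<in> {1..k} \<and> (fst x = 0 \<longrightarrow> snd x = 1)"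

definition star_dist :: "star_pt \<Rightarrow> star_pt \<Rightarrow> real" where
  "star_dist x x' = (if snd x = snd x' then \<bar>fst x - fst x'\<bar> else fst x + fst x')"

definition star_origin :: star_pt where
  "star_origin = (0, 1)"

definition integral_real :: "real \<Rightarrow> bool" where
  "integral_real t \<longleftrightarrow> t \<in> \<int>"

definition proper_half_integral_real :: "real \<Rightarrow> bool" where
  "proper_half_integral_real t \<longleftrightarrow> 2 * t \<in> \<int> \<and> t \<notin> \<int>"

type_synonym grid_pt = "star_pt \<times> real"

definition in_grid :: "nat \<Rightarrow> grid_pt \<Rightarrow> bool" where
  "in_grid k p \<longleftrightarrow> in_star k (fst p) \<and>
     ((integral_real (star_dist star_origin (fst p)) \<and> integral_real (snd p)) \<or>
      (proper_half_integral_real (star_dist star_origin (fst p)) \<and> proper_half_integral_real (snd p)))"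

definition grid_norm :: "grid_pt \<Rightarrow> grid_pt \<Rightarrow> real" where
  "grid_norm p q = star_dist (fst p) (fst q) + \<bar>snd p - snd q\<bar>"

text \<open>Elements of G^n: functions on V = {1..n}, fixed to a default value outside V.\<close>
definition grid_vec :: "nat \<Rightarrow> nat \<Rightarrow> (nat \<Rightarrow> grid_pt) \<Rightarrow> bool" where
  "grid_vec n k p \<longleftrightarrow> (\<forall>i\<in>{1..n}. in_grid k (p i)) \<and> (\<forall>i. i \<notin> {1..n} \<longrightarrow> p i = (star_origin, 0))"

definition vec_norm :: "nat \<Rightarrow> (nat \<Rightarrow> grid_pt) \<Rightarrow> (nat \<Rightarrow> grid_pt) \<Rightarrow> real" where
  "vec_norm n p q = Max ((\<lambda>i. grid_norm (p i) (q i)) ` {1..n})"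

text \<open>Potentials for d and M (graph: edges are 2-element subsets of {1..n}; terminals {1..k}).\<close>
definition is_potential ::
  "nat \<Rightarrow> nat \<Rightarrow> nat set set \<Rightarrow> (nat set \<Rightarrow> int) \<Rightarrow> int \<Rightarrow> (nat \<Rightarrow> grid_pt) \<Rightarrow> bool" where
  "is_potential n k E d M p \<longleftrightarrow>
     (\<forall>i j. {i, j} \<in> E \<longrightarrow> star_dist (fst (p i)) (fst (p j)) - snd (p i) - snd (p j) \<le> 2 * d {i, j}) \<and>
     (\<forall>s\<in>{1..k}. p s = ((real_of_int M, s), 0)) \<and>
     (\<forall>i\<in>{1..n}. snd (p i) \<ge> 0 \<and> star_dist star_origin (fst (p i)) \<le> M)"

definition h_fun ::
  "nat \<Rightarrow> nat \<Rightarrow> nat set set \<Rightarrow> (nat \<Rightarrow> int) \<Rightarrow> (nat set \<Rightarrow> int) \<Rightarrow> int \<Rightarrow> (nat \<Rightarrow> grid_pt) \<Rightarrow> ereal" where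
  "h_fun n k E c d M p =
     (if is_potential n k E d M p then ereal (\<Sum>i\<in>{1..n} - {1..k}. real_of_int (c i) * snd (p i)) else \<infinity>)"

definition is_minimizer ::
  "nat \<Rightarrow> nat \<Rightarrow> nat set set \<Rightarrow> (nat \<Rightarrow> int) \<Rightarrow> (nat set \<Rightarrow> int) \<Rightarrow> int \<Rightarrow> (nat \<Rightarrow> grid_pt) \<Rightarrow> bool" where
  "is_minimizer n k E c d M p \<longleftrightarrow> grid_vec n k p \<and>
     (\<forall>q. grid_vec n k q \<longrightarrow> h_fun n k E c d M p \<le> h_fun n k E c d M q)"

end

theory Submission imports Defs begin

definition pt :: "nat \<Rightarrow> nat \<Rightarrow> real \<Rightarrow> star_pt" where
  "pt a b z = (if z > 0 then (z, a) else if z < 0 then (-z, b) else (0, 1))"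
definition rayof :: "nat \<Rightarrow> nat \<Rightarrow> bool \<Rightarrow> nat" where
  "rayof a b e = (if e then a else b)"
definition sg :: "bool \<Rightarrow> real" where "sg e = (if e then 1 else -1)"
definition gpt :: "nat \<Rightarrow> nat \<Rightarrow> int \<Rightarrow> int \<Rightarrow> grid_pt" where
  "gpt a b U W = (pt a b (real_of_int (U + W) / 2), real_of_int (U - W) / 2)"
definition om :: "bool \<Rightarrow> int \<Rightarrow> int \<Rightarrow> int" where
  "om e U W = (if e then W else - U)"
definition sig :: "int \<Rightarrow> int \<Rightarrow> int" where
  "sig l t = (if l \<le> t then 1 else if t \<le> - l then -1 else 0)"
definition exq :: "int \<Rightarrow> int \<Rightarrow> int \<Rightarrow> int" where
  "exq l x y = x - sig l (x - y)"

lemma half_int_odd: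
  fixes x :: real
  assumes "2 * x \<in> \<int>" "x \<notin> \<int>"
  shows "\<exists>t::int. x = of_int t + 1/2"
proof -
  obtain m :: int where m: "2 * x = of_int m" using assms(1) Ints_cases by metis
  show ?thesis
  proof (cases "even m")
    case True
    then obtain t where "m = 2 * t" by auto
    then have "x = of_int t" using m by simp
    then show ?thesis using assms(2) by auto
  next
    case False
    then obtain t where "m = 2 * t + 1" using oddE by blast
    then have "x = of_int t + 1/2" using m by simp
    then show ?thesis by blast
  qed
qed

lemma int_half_iff:
  "(real_of_int m / 2 \<in> \<int>) \<longleftrightarrow> even m"
proof
  assume "real_of_int m / 2 \<in> \<int>"
  then obtain t :: int where "real_of_int m / 2 = of_int t" using Ints_cases by metis
  then have "m = 2 * t" by linarith
  then show "even m" by simp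
next
  assume "even m"
  then obtain t where "m = 2 * t" by auto
  then show "real_of_int m / 2 \<in> \<int>" by simp
qed

lemma in_grid_int:
  assumes "in_grid k P"
  shows "fst (fst P) + snd P \<in> \<int> \<and> fst (fst P) - snd P \<in> \<int>"
proof -
  obtain r s y where P: "P = ((r, s), y)" by (metis prod.collapse)
  have g: "in_grid k ((r, s), y)" using assms P by simp
  have st: "in_star k (r, s)" using g unfolding in_grid_def by simp
  then have r0: "r \<ge> 0" unfolding in_star_def by simp
  have dist: "star_dist star_origin (r, s) = r" using r0 unfolding star_dist_def star_origin_def by simp
  have "(integral_real (star_dist star_origin (r, s)) \<and> integral_real y) \<or>
    (proper_half_integral_real (star_dist star_origin (r, s)) \<and> proper_half_integral_real y)"
    using g unfolding in_grid_def fst_conv snd_conv by (rule conjunct2)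
  then have "(integral_real r \<and> integral_real y) \<or> (proper_half_integral_real r \<and> proper_half_integral_real y)"
    unfolding dist .
  then have "r + y \<in> \<int> \<and> r - y \<in> \<int>"
  proof
    assume "integral_real r \<and> integral_real y"
    then show ?thesis unfolding integral_real_def by auto
  next
    assume h: "proper_half_integral_real r \<and> proper_half_integral_real y"
    obtain t where t: "r = of_int t + 1/2" using half_int_odd h unfolding proper_half_integral_real_def by blast
    obtain u where u: "y = of_int u + 1/2" using half_int_odd h unfolding proper_half_integral_real_def by blast
    have "r + y = of_int (t + u + 1)" using t u by simp
    moreover have "r - y = of_int (t - u)" using t u by simp
    ultimately show ?thesis by (simp only: Ints_of_int)
  qed
  then show ?thesis using P by simp
qed

lemma pt_origin_dist: "star_dist star_origin (pt a b z) = \<bar>z\<bar>"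
  unfolding pt_def star_dist_def star_origin_def
  by (cases "z > 0"; cases "z < 0"; simp)

lemma gpt_grid:
  assumes "a \<in> {1..k}" "b \<in> {1..k}"
  shows "in_grid k (gpt a b U W)"
proof -
  define z where "z = real_of_int (U + W) / 2"
  define y where "y = real_of_int (U - W) / 2"
  have k1: "1 \<in> {1..k}" using assms by auto
  have st: "in_star k (pt a b z)"
    using assms k1 unfolding in_star_def pt_def by auto
  have d: "star_dist star_origin (pt a b z) = \<bar>z\<bar>"
    by (rule pt_origin_dist)
  have absI: "\<bar>x\<bar> \<in> \<int> \<longleftrightarrow> x \<in> \<int>" for x :: real
    by (cases "x \<ge> 0") (simp_all add: abs_if)
  have zi: "\<bar>z\<bar> \<in> \<int> \<longleftrightarrow> even (U + W)" by (simp only: z_def absI int_half_iff)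
  have yi: "y \<in> \<int> \<longleftrightarrow> even (U - W)" by (simp only: y_def int_half_iff)
  have z2: "2 * \<bar>z\<bar> \<in> \<int>"
  proof -
    have "2 * \<bar>z\<bar> = real_of_int \<bar>U + W\<bar>" unfolding z_def by simp
    then show ?thesis by (metis Ints_of_int)
  qed
  have y2: "2 * y \<in> \<int>"
  proof -
    have "2 * y = real_of_int (U - W)" unfolding y_def by simp
    then show ?thesis by (metis Ints_of_int)
  qed
  have par: "even (U + W) \<longleftrightarrow> even (U - W)" by presburger
  have "(integral_real \<bar>z\<bar> \<and> integral_real y) \<or>
        (proper_half_integral_real \<bar>z\<bar> \<and> proper_half_integral_real y)"
  proof (cases "even (U + W)")
    case True
    then show ?thesis unfolding integral_real_def using zi yi par by simp
  next
    case False
    then show ?thesis unfolding proper_half_integral_real_def using zi yi par z2 y2 by simp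
  qed
  moreover have "gpt a b U W = (pt a b z, y)" unfolding gpt_def z_def y_def by simp
  ultimately show ?thesis
    unfolding in_grid_def using st d by simp
qed


lemma forms_le:
  assumes "rayof a b e1 \<noteq> rayof c d e2"
  shows "sg e1 * z + sg e2 * z' \<le> star_dist (pt a b z) (pt c d z')"
proof -
  have "z > 0 \<or> z < 0 \<or> z = 0" "z' > 0 \<or> z' < 0 \<or> z' = 0" by linarith+
  then show ?thesis using assms
    by (elim disjE; cases e1; cases e2; auto simp add: pt_def star_dist_def rayof_def sg_def)
qed

lemma forms_ge:
  assumes "a \<noteq> b" "c \<noteq> d"
    and H: "\<forall>e1 e2. rayof a b e1 \<noteq> rayof c d e2 \<longrightarrow> sg e1 * z + sg e2 * z' \<le> t"
  shows "star_dist (pt a b z) (pt c d z') \<le> t"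
proof -
  have 1: "a \<noteq> c \<Longrightarrow> z + z' \<le> t" using H[rule_format, of True True] by (simp add: rayof_def sg_def)
  have 2: "a \<noteq> d \<Longrightarrow> z - z' \<le> t" using H[rule_format, of True False] by (simp add: rayof_def sg_def)
  have 3: "b \<noteq> c \<Longrightarrow> - z + z' \<le> t" using H[rule_format, of False True] by (simp add: rayof_def sg_def)
  have 4: "b \<noteq> d \<Longrightarrow> - z - z' \<le> t" using H[rule_format, of False False] by (simp add: rayof_def sg_def)
  have "z > 0 \<or> z < 0 \<or> z = 0" "z' > 0 \<or> z' < 0 \<or> z' = 0" by linarith+
  then show ?thesis using 1 2 3 4 assms(1,2)
    by (elim disjE; auto simp add: pt_def star_dist_def)
qed

lemma form_val:
  "sg e1 * (real_of_int (U + W) / 2) + sg e2 * (real_of_int (U' + W') / 2)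
     - real_of_int (U - W) / 2 - real_of_int (U' - W') / 2 = real_of_int (om e1 U W + om e2 U' W')"
  by (cases e1; cases e2; simp add: sg_def om_def field_simps)

lemma gap_iff:
  assumes "a \<noteq> b" "c \<noteq> d"
  shows "(star_dist (fst (gpt a b U W)) (fst (gpt c d U' W')) - snd (gpt a b U W) - snd (gpt c d U' W')
           \<le> real_of_int \<beta>) \<longleftrightarrow>
         (\<forall>e1 e2. rayof a b e1 \<noteq> rayof c d e2 \<longrightarrow> om e1 U W + om e2 U' W' \<le> \<beta>)"
proof -
  define z where "z = real_of_int (U + W) / 2"
  define z' where "z' = real_of_int (U' + W') / 2"
  define y where "y = real_of_int (U - W) / 2"
  define y' where "y' = real_of_int (U' - W') / 2"
  have g1: "gpt a b U W = (pt a b z, y)" unfolding gpt_def z_def y_def by simp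
  have g2: "gpt c d U' W' = (pt c d z', y')" unfolding gpt_def z'_def y'_def by simp
  have fv: "sg e1 * z + sg e2 * z' - y - y' = real_of_int (om e1 U W + om e2 U' W')" for e1 e2
    unfolding z_def z'_def y_def y'_def by (rule form_val)
  show ?thesis
  proof
    assume h: "star_dist (fst (gpt a b U W)) (fst (gpt c d U' W')) - snd (gpt a b U W) - snd (gpt c d U' W')
           \<le> real_of_int \<beta>"
    show "\<forall>e1 e2. rayof a b e1 \<noteq> rayof c d e2 \<longrightarrow> om e1 U W + om e2 U' W' \<le> \<beta>"
    proof (intro allI impI)
      fix e1 e2 assume ok: "rayof a b e1 \<noteq> rayof c d e2"
      have "sg e1 * z + sg e2 * z' \<le> star_dist (pt a b z) (pt c d z')" using forms_le[OF ok] .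
      then have "real_of_int (om e1 U W + om e2 U' W') \<le> real_of_int \<beta>"
        using h fv[of e1 e2] unfolding g1 g2 by simp
      then show "om e1 U W + om e2 U' W' \<le> \<beta>" by linarith
    qed
  next
    assume h: "\<forall>e1 e2. rayof a b e1 \<noteq> rayof c d e2 \<longrightarrow> om e1 U W + om e2 U' W' \<le> \<beta>"
    have "\<forall>e1 e2. rayof a b e1 \<noteq> rayof c d e2 \<longrightarrow> sg e1 * z + sg e2 * z' \<le> real_of_int \<beta> + y + y'"
    proof (intro allI impI)
      fix e1 e2 assume ok: "rayof a b e1 \<noteq> rayof c d e2"
      have "om e1 U W + om e2 U' W' \<le> \<beta>" using h ok by blast
      then have "real_of_int (om e1 U W + om e2 U' W') \<le> real_of_int \<beta>" by linarith
      then show "sg e1 * z + sg e2 * z' \<le> real_of_int \<beta> + y + y'" using fv[of e1 e2] by linarith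
    qed
    then have "star_dist (pt a b z) (pt c d z') \<le> real_of_int \<beta> + y + y'"
      using forms_ge[OF assms] by blast
    then show "star_dist (fst (gpt a b U W)) (fst (gpt c d U' W')) - snd (gpt a b U W) - snd (gpt c d U' W')
           \<le> real_of_int \<beta>" unfolding g1 g2 by simp
  qed
qed

lemma pt_inj:
  assumes "a \<noteq> b" "pt a b z = pt a b z'"
  shows "z = z'"
proof -
  have "z > 0 \<or> z < 0 \<or> z = 0" "z' > 0 \<or> z' < 0 \<or> z' = 0" by linarith+
  then show ?thesis using assms
    by (elim disjE; simp add: pt_def)
qed

lemma gpt_inj:
  assumes "a \<noteq> b" "gpt a b U W = gpt a b U' W'"
  shows "U = U' \<and> W = W'"
proof -
  have 0: "pt a b (real_of_int (U + W) / 2) = pt a b (real_of_int (U' + W') / 2)"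
    using assms(2) unfolding gpt_def by simp
  have 1: "real_of_int (U + W) / 2 = real_of_int (U' + W') / 2"
    using pt_inj[OF assms(1) 0] .
  have 2: "real_of_int (U - W) / 2 = real_of_int (U' - W') / 2"
    using assms(2) unfolding gpt_def by simp
  have "U + W = U' + W'" using 1 by simp
  moreover have "U - W = U' - W'" using 2 by simp
  ultimately show ?thesis by linarith
qed

lemma same_line_dist:
  assumes "a \<noteq> b"
  shows "star_dist (pt a b z) (pt a b z') = \<bar>z - z'\<bar>"
proof -
  have "z > 0 \<or> z < 0 \<or> z = 0" "z' > 0 \<or> z' < 0 \<or> z' = 0" by linarith+
  then show ?thesis using assms
    by (elim disjE; simp add: pt_def star_dist_def)
qed

lemma abs_half_max_real:
  fixes X Y :: real
  shows "\<bar>(X + Y) / 2\<bar> + \<bar>(X - Y) / 2\<bar> = max \<bar>X\<bar> \<bar>Y\<bar>"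
  by (auto simp: abs_if max_def field_simps)

lemma gpt_norm:
  assumes "a \<noteq> b"
  shows "grid_norm (gpt a b U W) (gpt a b U' W') = real_of_int (max \<bar>U - U'\<bar> \<bar>W - W'\<bar>)"
proof -
  define X where "X = real_of_int (U - U')"
  define Y where "Y = real_of_int (W - W')"
  have e1: "real_of_int (U + W) / 2 - real_of_int (U' + W') / 2 = (X + Y) / 2"
    unfolding X_def Y_def by (simp add: field_simps)
  have e2: "real_of_int (U - W) / 2 - real_of_int (U' - W') / 2 = (X - Y) / 2"
    unfolding X_def Y_def by (simp add: field_simps)
  have "grid_norm (gpt a b U W) (gpt a b U' W') =
     \<bar>real_of_int (U + W) / 2 - real_of_int (U' + W') / 2\<bar> + \<bar>real_of_int (U - W) / 2 - real_of_int (U' - W') / 2\<bar>"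
    unfolding grid_norm_def gpt_def using same_line_dist[OF assms] by simp
  also have "\<dots> = max \<bar>X\<bar> \<bar>Y\<bar>" unfolding e1 e2 by (rule abs_half_max_real)
  also have "\<dots> = real_of_int (max \<bar>U - U'\<bar> \<bar>W - W'\<bar>)" unfolding X_def Y_def by simp
  finally show ?thesis .
qed


definition oth :: "nat \<Rightarrow> nat" where "oth s = (if s = 1 then 2 else 1)"

lemma oth_props: "2 \<le> k \<Longrightarrow> s \<in> {1..k} \<Longrightarrow> oth s \<noteq> s \<and> oth s \<in> {1..k}"
  unfolding oth_def by auto

lemma pt_pos: "r > 0 \<Longrightarrow> pt a b r = (r, a)" unfolding pt_def by simp
lemma pt_neg: "r > 0 \<Longrightarrow> pt a b (- r) = (r, b)" unfolding pt_def by simp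
lemma pt_zero: "pt a b 0 = (0, 1)" unfolding pt_def by simp

lemma line_rep:
  assumes "in_star k (r, s)" "in_star k (r', s')" "2 \<le> k"
  shows "\<exists>a b z z'. a \<noteq> b \<and> a \<in> {1..k} \<and> b \<in> {1..k} \<and> pt a b z = (r, s) \<and> pt a b z' = (r', s')
     \<and> (z = r \<or> z = - r) \<and> (z' = r' \<or> z' = - r')"
proof -
  have r0: "r \<ge> 0" "s \<in> {1..k}" "r = 0 \<longrightarrow> s = 1" using assms(1) unfolding in_star_def by auto
  have r0': "r' \<ge> 0" "s' \<in> {1..k}" "r' = 0 \<longrightarrow> s' = 1" using assms(2) unfolding in_star_def by auto
  show ?thesis
  proof (cases "r > 0")
    case True
    show ?thesis
    proof (cases "r' > 0 \<and> s' \<noteq> s")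
      case True2: True
      have "pt s s' r = (r, s)" using pt_pos[OF True] .
      moreover have "pt s s' (- r') = (r', s')" using pt_neg True2 by simp
      ultimately show ?thesis
        apply (rule_tac x=s in exI, rule_tac x=s' in exI, rule_tac x=r in exI, rule_tac x="-r'" in exI)
        using True2 r0 r0' by simp
    next
      case False
      have "pt s (oth s) r = (r, s)" using pt_pos[OF True] .
      moreover have "pt s (oth s) r' = (r', s')"
      proof (cases "r' > 0")
        case True
        then show ?thesis using False pt_pos by simp
      next
        case False
        then have "r' = 0" using r0' by simp
        then show ?thesis using r0' pt_zero by simp
      qed
      moreover have "oth s \<noteq> s \<and> oth s \<in> {1..k}" using oth_props[OF assms(3) r0(2)] .
      ultimately show ?thesis
        apply (rule_tac x=s in exI, rule_tac x="oth s" in exI, rule_tac x=r in exI, rule_tac x="r'" in exI)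
        using r0 by simp
    qed
  next
    case False
    then have rz: "r = 0" "s = 1" using r0 by auto
    have "pt s' (oth s') 0 = (r, s)" using rz pt_zero by simp
    moreover have "pt s' (oth s') r' = (r', s')"
    proof (cases "r' > 0")
      case True
      then show ?thesis using pt_pos by simp
    next
      case False
      then have "r' = 0" using r0' by simp
      then show ?thesis using r0' pt_zero by simp
    qed
    moreover have "oth s' \<noteq> s' \<and> oth s' \<in> {1..k}" using oth_props[OF assms(3) r0'(2)] .
    ultimately show ?thesis
      apply (rule_tac x=s' in exI, rule_tac x="oth s'" in exI, rule_tac x=0 in exI, rule_tac x="r'" in exI)
      using r0' rz by auto
  qed
qed

lemma rep_int:
  assumes "in_grid k P" "z = fst (fst P) \<or> z = - fst (fst P)"
  shows "\<exists>U W. z = real_of_int (U + W) / 2 \<and> snd P = real_of_int (U - W) / 2"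
proof -
  have i: "fst (fst P) + snd P \<in> \<int>" "fst (fst P) - snd P \<in> \<int>" using in_grid_int[OF assms(1)] by auto
  have "z + snd P \<in> \<int> \<and> z - snd P \<in> \<int>"
  proof (cases "z = fst (fst P)")
    case True then show ?thesis using i by simp
  next
    case False
    then have zz: "z = - fst (fst P)" using assms(2) by simp
    have "z + snd P = - (fst (fst P) - snd P)" using zz by simp
    moreover have "z - snd P = - (fst (fst P) + snd P)" using zz by simp
    ultimately show ?thesis using i by (simp only: minus_in_Ints_iff)
  qed
  then obtain U W :: int where U: "z + snd P = of_int U" and W: "z - snd P = of_int W"
    by (metis Ints_cases)
  have "z = real_of_int (U + W) / 2" using U W by simp
  moreover have "snd P = real_of_int (U - W) / 2" using U W by simp
  ultimately show ?thesis by blast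
qed

lemma rep2:
  assumes "in_grid k P" "in_grid k Q" "2 \<le> k"
  shows "\<exists>a b U W U' W'. a \<noteq> b \<and> a \<in> {1..k} \<and> b \<in> {1..k} \<and> P = gpt a b U W \<and> Q = gpt a b U' W'"
proof -
  obtain r s y where P: "P = ((r, s), y)" by (metis prod.collapse)
  obtain r' s' y' where Q: "Q = ((r', s'), y')" by (metis prod.collapse)
  have st: "in_star k (r, s)" "in_star k (r', s')"
    using assms(1,2) P Q unfolding in_grid_def by auto
  obtain a b z z' where L: "a \<noteq> b" "a \<in> {1..k}" "b \<in> {1..k}" "pt a b z = (r, s)" "pt a b z' = (r', s')"
     "z = r \<or> z = - r" "z' = r' \<or> z' = - r'"
    using line_rep[OF st assms(3)] by blast
  obtain U W where UW: "z = real_of_int (U + W) / 2" "y = real_of_int (U - W) / 2"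
    using rep_int[OF assms(1), of z] L(6) P by auto
  obtain U' W' where UW': "z' = real_of_int (U' + W') / 2" "y' = real_of_int (U' - W') / 2"
    using rep_int[OF assms(2), of z'] L(7) Q by auto
  have "P = gpt a b U W" unfolding gpt_def using P L(4) UW by simp
  moreover have "Q = gpt a b U' W'" unfolding gpt_def using Q L(5) UW' by simp
  ultimately show ?thesis using L(1-3) by blast
qed

lemma sig_cases:
  "(sig l t = 1 \<and> l \<le> t) \<or> (sig l t = -1 \<and> t \<le> - l \<and> t < l) \<or> (sig l t = 0 \<and> - l < t \<and> t < l)"
  unfolding sig_def by auto

lemma sig_neg: "1 \<le> l \<Longrightarrow> sig l (- t) = - sig l t"
  unfolding sig_def by auto

lemma sig_zero: "1 \<le> l \<Longrightarrow> sig l 0 = 0"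
  unfolding sig_def by auto

lemma exq_same: "1 \<le> l \<Longrightarrow> exq l x x = x"
  unfolding exq_def using sig_zero by simp

lemma om_exq:
  assumes "1 \<le> l"
  shows "om e (exq l U U') (exq l W W') = exq l (om e U W) (om e U' W')"
proof (cases e)
  case True then show ?thesis by (simp add: om_def)
next
  case False
  have "- (U - sig l (U - U')) = - U - sig l (- U - - U')"
    using sig_neg[OF assms, of "U - U'"] by simp
  then show ?thesis using False by (simp add: om_def exq_def)
qed

lemma oneD_gen:
  fixes a b a' b' bo bt l :: int
  assumes "1 \<le> l" "a + b \<le> bo" "a' + b' \<le> bt" "bt \<le> bo"
  shows "exq l a a' + exq l b b' \<le> bo"
  using assms sig_cases[of l "a - a'"] sig_cases[of l "b - b'"] unfolding exq_def
  by (elim disjE conjE; linarith)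

lemma exq_cost:
  assumes "1 \<le> l"
  shows "(exq l U U' - exq l W W') + (exq l U' U - exq l W' W) = (U - W) + (U' - W')"
  using sig_neg[OF assms, of "U - U'"] sig_neg[OF assms, of "W - W'"] unfolding exq_def by simp

lemma exq_y:
  fixes U W U' W' l :: int
  assumes "1 \<le> l" "W \<le> U" "W' \<le> U'"
  shows "exq l W W' \<le> exq l U U'"
  using assms sig_cases[of l "U - U'"] sig_cases[of l "W - W'"] unfolding exq_def
  by (elim disjE conjE; linarith)

lemma exq_box:
  fixes U W U' W' l K :: int
  assumes "1 \<le> l" "\<bar>U + W\<bar> \<le> K" "\<bar>U' + W'\<bar> \<le> K"
  shows "\<bar>exq l U U' + exq l W W'\<bar> \<le> K"
  using assms sig_cases[of l "U - U'"] sig_cases[of l "W - W'"] unfolding exq_def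
  by (elim disjE conjE; simp add: abs_le_iff; linarith)

lemma exq_dist:
  fixes x y l :: int
  assumes "1 \<le> l"
  shows "\<bar>exq l x y - y\<bar> = (if l \<le> \<bar>x - y\<bar> then \<bar>x - y\<bar> - 1 else \<bar>x - y\<bar>)"
  using assms sig_cases[of l "x - y"] unfolding exq_def
  by (elim disjE conjE; simp add: abs_if; linarith)

lemma fail1:
  fixes a b a' b' \<beta> :: int
  assumes "exq 1 a a' + exq 1 b b' > \<beta> - 2" "a + b \<le> \<beta> - 2" "a' + b' \<le> \<beta>"
  shows "-2 \<le> a - a' \<and> a - a' \<le> 0 \<and> -2 \<le> b - b' \<and> b - b' \<le> 0 \<and> \<beta> - 3 \<le> a + b"
  using assms sig_cases[of 1 "a - a'"] sig_cases[of 1 "b - b'"] unfolding exq_def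
  by (elim disjE conjE; linarith)

lemma failm:
  fixes a b a' b' \<beta> m :: int
  assumes "3 \<le> m" "exq m a a' + exq m b b' > \<beta> - 2" "a + b \<le> \<beta> - 2" "a' + b' \<le> \<beta>"
    "- m \<le> a - a'" "a - a' \<le> m" "- m \<le> b - b'" "b - b' \<le> m"
  shows "a + b = \<beta> - 2 \<and> ((a - a' = - m \<and> m - 2 \<le> b - b') \<or> (b - b' = - m \<and> m - 2 \<le> a - a'))"
  using assms sig_cases[of m "a - a'"] sig_cases[of m "b - b'"] unfolding exq_def
  by (elim disjE conjE; linarith)

lemma oneD_e0:
  fixes a1 b1 a1' b1' a2 b2 a2' b2' m \<beta> :: int
  assumes "3 \<le> m" "4 \<le> \<beta>"
    and f1: "exq 1 a1 a1' + exq 1 b1 b1' > \<beta> - 2" "a1 + b1 \<le> \<beta> - 2" "a1' + b1' \<le> \<beta>"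
    and f2: "exq m a2 a2' + exq m b2 b2' > \<beta> - 2" "a2 + b2 \<le> \<beta> - 2" "a2' + b2' \<le> \<beta>"
       "\<bar>a2 - a2'\<bar> \<le> m" "\<bar>b2 - b2'\<bar> \<le> m"
    and ra: "(a1 = a2 \<and> a1' = a2') \<or> a1 + a2 \<le> 0"
    and rb: "(b1 = b2 \<and> b1' = b2') \<or> b1 + b2 \<le> 0"
  shows False
proof -
  have A: "-2 \<le> a1 - a1' \<and> a1 - a1' \<le> 0 \<and> -2 \<le> b1 - b1' \<and> b1 - b1' \<le> 0 \<and> \<beta> - 3 \<le> a1 + b1"
    using fail1[OF f1] .
  have B: "a2 + b2 = \<beta> - 2 \<and> ((a2 - a2' = - m \<and> m - 2 \<le> b2 - b2') \<or> (b2 - b2' = - m \<and> m - 2 \<le> a2 - a2'))"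
    using failm[OF assms(1) f2(1-3)] f2(4,5) by (simp add: abs_le_iff)
  show False using A B ra rb assms(1,2) by (elim disjE conjE; linarith)
qed


locale exch =
  fixes n k :: nat and E :: "nat set set" and dO dT :: "nat set \<Rightarrow> int" and M :: int
    and Ow Ot :: "nat \<Rightarrow> grid_pt" and A B :: "nat \<Rightarrow> nat" and UO WO UT WT :: "nat \<Rightarrow> int"
  assumes k2: "2 \<le> k" and kn: "k \<le> n"
    and E_simple: "\<forall>e\<in>E. \<exists>i j. e = {i, j} \<and> i \<noteq> j \<and> i \<in> {1..n} \<and> j \<in> {1..n}"
    and AB: "\<forall>i\<in>{1..n}. A i \<noteq> B i \<and> A i \<in> {1..k} \<and> B i \<in> {1..k}"
    and repO: "\<forall>i\<in>{1..n}. Ow i = gpt (A i) (B i) (UO i) (WO i)"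
    and repT: "\<forall>i\<in>{1..n}. Ot i = gpt (A i) (B i) (UT i) (WT i)"
    and gvO: "grid_vec n k Ow" and gvT: "grid_vec n k Ot"
    and potO: "is_potential n k E dO M Ow" and potT: "is_potential n k E dT M Ot"
begin

definition newO :: "int \<Rightarrow> nat \<Rightarrow> grid_pt" where
  "newO l i = (if i \<in> {1..n} then gpt (A i) (B i) (exq l (UO i) (UT i)) (exq l (WO i) (WT i)) else Ow i)"

lemma newO_in: "i \<in> {1..n} \<Longrightarrow> newO l i = gpt (A i) (B i) (exq l (UO i) (UT i)) (exq l (WO i) (WT i))"
  unfolding newO_def by simp

lemma new_grid: "grid_vec n k (newO l)"
proof -
  have "\<forall>i\<in>{1..n}. in_grid k (newO l i)"
    using AB gpt_grid newO_in by auto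
  moreover have "\<forall>i. i \<notin> {1..n} \<longrightarrow> newO l i = (star_origin, 0)"
    using gvO unfolding grid_vec_def newO_def by auto
  ultimately show ?thesis unfolding grid_vec_def by blast
qed

lemma edge_nodes: "{i, j} \<in> E \<Longrightarrow> i \<in> {1..n} \<and> j \<in> {1..n}"
proof -
  assume "{i, j} \<in> E"
  then obtain i0 j0 where "{i, j} = {i0, j0}" "i0 \<in> {1..n}" "j0 \<in> {1..n}" using E_simple by blast
  then show ?thesis by (metis doubleton_eq_iff)
qed

lemma yO: "i \<in> {1..n} \<Longrightarrow> WO i \<le> UO i"
proof -
  assume i: "i \<in> {1..n}"
  have "snd (Ow i) \<ge> 0" using potO i unfolding is_potential_def by blast
  then have "real_of_int (UO i - WO i) / 2 \<ge> 0" using repO i unfolding gpt_def by simp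
  then show ?thesis by simp
qed

lemma yT: "i \<in> {1..n} \<Longrightarrow> WT i \<le> UT i"
proof -
  assume i: "i \<in> {1..n}"
  have "snd (Ot i) \<ge> 0" using potT i unfolding is_potential_def by blast
  then have "real_of_int (UT i - WT i) / 2 \<ge> 0" using repT i unfolding gpt_def by simp
  then show ?thesis by simp
qed

lemma boxO: "i \<in> {1..n} \<Longrightarrow> \<bar>UO i + WO i\<bar> \<le> 2 * M"
proof -
  assume i: "i \<in> {1..n}"
  have "star_dist star_origin (fst (Ow i)) \<le> M" using potO i unfolding is_potential_def by blast
  then have "\<bar>real_of_int (UO i + WO i) / 2\<bar> \<le> M" using repO i pt_origin_dist unfolding gpt_def by simp
  then show ?thesis by simp
qed

lemma boxT: "i \<in> {1..n} \<Longrightarrow> \<bar>UT i + WT i\<bar> \<le> 2 * M"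
proof -
  assume i: "i \<in> {1..n}"
  have "star_dist star_origin (fst (Ot i)) \<le> M" using potT i unfolding is_potential_def by blast
  then have "\<bar>real_of_int (UT i + WT i) / 2\<bar> \<le> M" using repT i pt_origin_dist unfolding gpt_def by simp
  then show ?thesis by simp
qed

lemma new_box:
  assumes "1 \<le> l" "i \<in> {1..n}"
  shows "snd (newO l i) \<ge> 0 \<and> star_dist star_origin (fst (newO l i)) \<le> M"
proof -
  have y: "exq l (WO i) (WT i) \<le> exq l (UO i) (UT i)" using exq_y[OF assms(1) yO yT] assms(2) by blast
  have b: "\<bar>exq l (UO i) (UT i) + exq l (WO i) (WT i)\<bar> \<le> 2 * M"
    using exq_box[OF assms(1) boxO boxT] assms(2) by blast
  have "snd (newO l i) = real_of_int (exq l (UO i) (UT i) - exq l (WO i) (WT i)) / 2"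
    using newO_in[OF assms(2)] unfolding gpt_def by simp
  moreover have "star_dist star_origin (fst (newO l i)) = \<bar>real_of_int (exq l (UO i) (UT i) + exq l (WO i) (WT i)) / 2\<bar>"
    using newO_in[OF assms(2)] pt_origin_dist unfolding gpt_def by simp
  ultimately show ?thesis using y b by simp
qed

lemma term_eq:
  assumes "1 \<le> l" "s \<in> {1..k}"
  shows "newO l s = ((real_of_int M, s), 0)"
proof -
  have sn: "s \<in> {1..n}" using assms(2) kn by auto
  have o: "Ow s = ((real_of_int M, s), 0)" using potO assms(2) unfolding is_potential_def by blast
  have t: "Ot s = ((real_of_int M, s), 0)" using potT assms(2) unfolding is_potential_def by blast
  have "gpt (A s) (B s) (UO s) (WO s) = gpt (A s) (B s) (UT s) (WT s)" using o t repO repT sn by metis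
  then have "UO s = UT s \<and> WO s = WT s" using gpt_inj AB sn by blast
  then have "newO l s = Ow s" using newO_in[OF sn] repO sn exq_same[OF assms(1)] by simp
  then show ?thesis using o by simp
qed

lemma cons_forms:
  assumes "i \<in> {1..n}" "j \<in> {1..n}"
  shows "(star_dist (fst (gpt (A i) (B i) U W)) (fst (gpt (A j) (B j) U' W'))
          - snd (gpt (A i) (B i) U W) - snd (gpt (A j) (B j) U' W') \<le> real_of_int \<beta>) \<longleftrightarrow>
         (\<forall>e1 e2. rayof (A i) (B i) e1 \<noteq> rayof (A j) (B j) e2 \<longrightarrow> om e1 U W + om e2 U' W' \<le> \<beta>)"
  using gap_iff AB assms by blast

lemma new_edge:
  assumes "1 \<le> l" "{i, j} \<in> E" "dT {i, j} \<le> dO {i, j}"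
  shows "star_dist (fst (newO l i)) (fst (newO l j)) - snd (newO l i) - snd (newO l j) \<le> real_of_int (2 * dO {i, j})"
proof -
  have ij: "i \<in> {1..n}" "j \<in> {1..n}" using edge_nodes[OF assms(2)] by auto
  have cO: "star_dist (fst (Ow i)) (fst (Ow j)) - snd (Ow i) - snd (Ow j) \<le> real_of_int (2 * dO {i, j})"
    using potO assms(2) unfolding is_potential_def by simp
  have cT: "star_dist (fst (Ot i)) (fst (Ot j)) - snd (Ot i) - snd (Ot j) \<le> real_of_int (2 * dT {i, j})"
    using potT assms(2) unfolding is_potential_def by simp
  have cO': "star_dist (fst (gpt (A i) (B i) (UO i) (WO i))) (fst (gpt (A j) (B j) (UO j) (WO j)))
     - snd (gpt (A i) (B i) (UO i) (WO i)) - snd (gpt (A j) (B j) (UO j) (WO j)) \<le> real_of_int (2 * dO {i, j})"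
    using cO repO ij by simp
  have cT': "star_dist (fst (gpt (A i) (B i) (UT i) (WT i))) (fst (gpt (A j) (B j) (UT j) (WT j)))
     - snd (gpt (A i) (B i) (UT i) (WT i)) - snd (gpt (A j) (B j) (UT j) (WT j)) \<le> real_of_int (2 * dT {i, j})"
    using cT repT ij by simp
  have fO: "\<forall>e1 e2. rayof (A i) (B i) e1 \<noteq> rayof (A j) (B j) e2 \<longrightarrow>
             om e1 (UO i) (WO i) + om e2 (UO j) (WO j) \<le> 2 * dO {i, j}"
    using cons_forms[OF ij, THEN iffD1, OF cO'] .
  have fT: "\<forall>e1 e2. rayof (A i) (B i) e1 \<noteq> rayof (A j) (B j) e2 \<longrightarrow>
             om e1 (UT i) (WT i) + om e2 (UT j) (WT j) \<le> 2 * dT {i, j}"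
    using cons_forms[OF ij, THEN iffD1, OF cT'] .
  have "\<forall>e1 e2. rayof (A i) (B i) e1 \<noteq> rayof (A j) (B j) e2 \<longrightarrow>
      om e1 (exq l (UO i) (UT i)) (exq l (WO i) (WT i)) + om e2 (exq l (UO j) (UT j)) (exq l (WO j) (WT j))
        \<le> 2 * dO {i, j}"
  proof (intro allI impI)
    fix e1 e2 assume ok: "rayof (A i) (B i) e1 \<noteq> rayof (A j) (B j) e2"
    have "exq l (om e1 (UO i) (WO i)) (om e1 (UT i) (WT i)) + exq l (om e2 (UO j) (WO j)) (om e2 (UT j) (WT j))
        \<le> 2 * dO {i, j}"
    proof -
      have "om e1 (UO i) (WO i) + om e2 (UO j) (WO j) \<le> 2 * dO {i, j}" using fO ok by blast
      moreover have "om e1 (UT i) (WT i) + om e2 (UT j) (WT j) \<le> 2 * dT {i, j}" using fT ok by blast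
      moreover have "2 * dT {i, j} \<le> 2 * dO {i, j}" using assms(3) by simp
      ultimately show ?thesis by (rule oneD_gen[OF assms(1)])
    qed
    then show "om e1 (exq l (UO i) (UT i)) (exq l (WO i) (WT i)) + om e2 (exq l (UO j) (UT j)) (exq l (WO j) (WT j))
        \<le> 2 * dO {i, j}" using om_exq[OF assms(1)] by simp
  qed
  then have "star_dist (fst (gpt (A i) (B i) (exq l (UO i) (UT i)) (exq l (WO i) (WT i))))
       (fst (gpt (A j) (B j) (exq l (UO j) (UT j)) (exq l (WO j) (WT j))))
     - snd (gpt (A i) (B i) (exq l (UO i) (UT i)) (exq l (WO i) (WT i)))
     - snd (gpt (A j) (B j) (exq l (UO j) (UT j)) (exq l (WO j) (WT j))) \<le> real_of_int (2 * dO {i, j})"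
    using cons_forms[OF ij, THEN iffD2] by blast
  then show ?thesis using newO_in ij by simp
qed

lemma new_pot:
  assumes "1 \<le> l" "\<forall>e\<in>E. dT e \<le> dO e"
  shows "is_potential n k E dO M (newO l)"
  unfolding is_potential_def using new_edge[OF assms(1)] assms(2) term_eq[OF assms(1)] new_box[OF assms(1)]
  by blast

lemma new_norm:
  assumes "i \<in> {1..n}"
  shows "grid_norm (Ot i) (newO l i) = real_of_int (max \<bar>UT i - exq l (UO i) (UT i)\<bar> \<bar>WT i - exq l (WO i) (WT i)\<bar>)"
  using gpt_norm AB assms repT newO_in by simp

lemma old_norm:
  assumes "i \<in> {1..n}"
  shows "grid_norm (Ot i) (Ow i) = real_of_int (max \<bar>UT i - UO i\<bar> \<bar>WT i - WO i\<bar>)"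
  using gpt_norm AB assms repT repO by simp

end


lemma node_dec:
  fixes x y u v l :: int
  assumes "1 \<le> l"
  shows "max \<bar>exq l x y - y\<bar> \<bar>exq l u v - v\<bar> \<le> max \<bar>x - y\<bar> \<bar>u - v\<bar> \<and>
    (l \<le> max \<bar>x - y\<bar> \<bar>u - v\<bar> \<longrightarrow> max \<bar>exq l x y - y\<bar> \<bar>exq l u v - v\<bar> \<le> max \<bar>x - y\<bar> \<bar>u - v\<bar> - 1)"
  using exq_dist[OF assms, of x y] exq_dist[OF assms, of u v] by (simp add: max_def split: if_splits)

lemma star_dist_comm: "star_dist x y = star_dist y x"
  unfolding star_dist_def by auto

definition cost :: "nat \<Rightarrow> nat \<Rightarrow> (nat \<Rightarrow> int) \<Rightarrow> (nat \<Rightarrow> grid_pt) \<Rightarrow> real" where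
  "cost n k c r = (\<Sum>i\<in>{1..n} - {1..k}. real_of_int (c i) * snd (r i))"

lemma h_pot: "is_potential n k E d M r \<Longrightarrow> h_fun n k E c d M r = ereal (cost n k c r)"
  unfolding h_fun_def cost_def by simp

lemma step:
  fixes n k :: nat and E :: "nat set set" and c :: "nat \<Rightarrow> int" and d :: "nat set \<Rightarrow> int"
    and M :: int and e0 :: "nat set" and p q :: "nat \<Rightarrow> grid_pt"
  assumes k3: "3 \<le> k" and kn: "k \<le> n"
    and E_simple: "\<forall>e\<in>E. \<exists>i j. e = {i, j} \<and> i \<noteq> j \<and> i \<in> {1..n} \<and> j \<in> {1..n}"
    and d_pos: "\<forall>e\<in>E. d e > 0"
    and e0E: "e0 \<in> E" and e0_even: "even (d e0)"
    and p_min: "is_minimizer n k E c d M p" and potp: "is_potential n k E d M p"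
    and q_min: "is_minimizer n k E c (d(e0 := d e0 - 1)) M q"
    and potq: "is_potential n k E (d(e0 := d e0 - 1)) M q"
    and big: "vec_norm n p q > 2"
  shows "\<exists>q'. is_minimizer n k E c (d(e0 := d e0 - 1)) M q' \<and>
     (\<Sum>i\<in>{1..n}. grid_norm (p i) (q' i)) \<le> (\<Sum>i\<in>{1..n}. grid_norm (p i) (q i)) - 1"
proof -
  define d1 where "d1 = d(e0 := d e0 - 1)"
  have potq1: "is_potential n k E d1 M q" using potq d1_def by simp
  have gvp: "grid_vec n k p" using p_min unfolding is_minimizer_def by blast
  have gvq: "grid_vec n k q" using q_min unfolding is_minimizer_def by blast
  have k2: "2 \<le> k" using k3 by simp
  have ex: "\<forall>i\<in>{1..n}. \<exists>t. case t of (a, b, U, W, U', W') \<Rightarrow>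
      a \<noteq> b \<and> a \<in> {1..k} \<and> b \<in> {1..k} \<and> q i = gpt a b U W \<and> p i = gpt a b U' W'"
  proof
    fix i assume i: "i \<in> {1..n}"
    have "in_grid k (q i)" "in_grid k (p i)" using gvp gvq i unfolding grid_vec_def by auto
    then obtain a b U W U' W' where "a \<noteq> b \<and> a \<in> {1..k} \<and> b \<in> {1..k} \<and> q i = gpt a b U W \<and> p i = gpt a b U' W'"
      using rep2 k2 by metis
    then show "\<exists>t. case t of (a, b, U, W, U', W') \<Rightarrow>
      a \<noteq> b \<and> a \<in> {1..k} \<and> b \<in> {1..k} \<and> q i = gpt a b U W \<and> p i = gpt a b U' W'"
      by (intro exI[of _ "(a, b, U, W, U', W')"]) simp
  qed
  obtain T where T: "\<forall>i\<in>{1..n}. case T i of (a, b, U, W, U', W') \<Rightarrow>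
      a \<noteq> b \<and> a \<in> {1..k} \<and> b \<in> {1..k} \<and> q i = gpt a b U W \<and> p i = gpt a b U' W'"
    using bchoice[OF ex] by blast
  define A where "A i = fst (T i)" for i
  define B where "B i = fst (snd (T i))" for i
  define UQ where "UQ i = fst (snd (snd (T i)))" for i
  define WQ where "WQ i = fst (snd (snd (snd (T i))))" for i
  define UP where "UP i = fst (snd (snd (snd (snd (T i)))))" for i
  define WP where "WP i = snd (snd (snd (snd (snd (T i)))))" for i
  have Tprops: "A i \<noteq> B i \<and> A i \<in> {1..k} \<and> B i \<in> {1..k} \<and> q i = gpt (A i) (B i) (UQ i) (WQ i)
      \<and> p i = gpt (A i) (B i) (UP i) (WP i)" if "i \<in> {1..n}" for i
  proof -
    obtain a b U W U' W' where Ti: "T i = (a, b, U, W, U', W')" by (metis prod.collapse)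
    have "case T i of (a, b, U, W, U', W') \<Rightarrow>
      a \<noteq> b \<and> a \<in> {1..k} \<and> b \<in> {1..k} \<and> q i = gpt a b U W \<and> p i = gpt a b U' W'"
      using bspec[OF T that] .
    then have "a \<noteq> b \<and> a \<in> {1..k} \<and> b \<in> {1..k} \<and> q i = gpt a b U W \<and> p i = gpt a b U' W'"
      unfolding Ti by simp
    then show ?thesis unfolding A_def B_def UQ_def WQ_def UP_def WP_def Ti by simp
  qed
  have AB: "\<forall>i\<in>{1..n}. A i \<noteq> B i \<and> A i \<in> {1..k} \<and> B i \<in> {1..k}" using Tprops by blast
  have repq: "\<forall>i\<in>{1..n}. q i = gpt (A i) (B i) (UQ i) (WQ i)" using Tprops by blast
  have repp: "\<forall>i\<in>{1..n}. p i = gpt (A i) (B i) (UP i) (WP i)" using Tprops by blast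
  interpret Qx: exch n k E d1 d M q p A B UQ WQ UP WP
    using k2 kn E_simple AB repq repp gvq gvp potq1 potp by unfold_locales auto
  interpret Px: exch n k E d d1 M p q A B UP WP UQ WQ
    using k2 kn E_simple AB repq repp gvq gvp potq1 potp by unfold_locales auto
  have fin: "finite ((\<lambda>i. grid_norm (p i) (q i)) ` {1..n})" "(\<lambda>i. grid_norm (p i) (q i)) ` {1..n} \<noteq> {}"
    using kn k3 by auto
  obtain i0 where i0: "i0 \<in> {1..n}" "grid_norm (p i0) (q i0) = vec_norm n p q"
    using Max_in[OF fin] unfolding vec_norm_def by auto
  have nle: "grid_norm (p i) (q i) \<le> vec_norm n p q" if "i \<in> {1..n}" for i
    using Max_ge[OF fin(1)] that unfolding vec_norm_def by auto
  have onorm: "grid_norm (p i) (q i) = real_of_int (max \<bar>UP i - UQ i\<bar> \<bar>WP i - WQ i\<bar>)" if "i \<in> {1..n}" for i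
    using Qx.old_norm[OF that] .
  define m where "m = max \<bar>UP i0 - UQ i0\<bar> \<bar>WP i0 - WQ i0\<bar>"
  have m3: "3 \<le> m"
  proof -
    have "real_of_int m > 2" using big i0 onorm[OF i0(1)] m_def by simp
    then show ?thesis by linarith
  qed
  have mb: "\<bar>UQ i - UP i\<bar> \<le> m \<and> \<bar>WQ i - WP i\<bar> \<le> m" if "i \<in> {1..n}" for i
  proof -
    have "real_of_int (max \<bar>UP i - UQ i\<bar> \<bar>WP i - WQ i\<bar>) \<le> real_of_int m"
      using nle[OF that] onorm[OF that] i0 onorm[OF i0(1)] m_def by simp
    then show ?thesis by (simp add: abs_minus_commute)
  qed
  obtain a0 b0 where e0ab: "e0 = {a0, b0}" "a0 \<noteq> b0" "a0 \<in> {1..n}" "b0 \<in> {1..n}"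
    using E_simple e0E by blast
  define \<beta> where "\<beta> = 2 * d e0"
  have b4: "4 \<le> \<beta>"
  proof -
    have "d e0 > 0" using d_pos e0E by blast
    then have "d e0 \<ge> 2" using e0_even by presburger
    then show ?thesis unfolding \<beta>_def by simp
  qed
  have d1e0: "2 * d1 e0 = \<beta> - 2" unfolding d1_def \<beta>_def by simp
  define good where "good l \<longleftrightarrow> star_dist (fst (Qx.newO l a0)) (fst (Qx.newO l b0))
      - snd (Qx.newO l a0) - snd (Qx.newO l b0) \<le> real_of_int (2 * d1 e0)" for l
  have goodf: "good l \<longleftrightarrow> (\<forall>e1 e2. rayof (A a0) (B a0) e1 \<noteq> rayof (A b0) (B b0) e2 \<longrightarrow>
      exq l (om e1 (UQ a0) (WQ a0)) (om e1 (UP a0) (WP a0)) + exq l (om e2 (UQ b0) (WQ b0)) (om e2 (UP b0) (WP b0))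
        \<le> \<beta> - 2)" if l1: "1 \<le> l" for l
    unfolding good_def Qx.newO_in[OF e0ab(3)] Qx.newO_in[OF e0ab(4)] Qx.cons_forms[OF e0ab(3,4)] d1e0
    using om_exq[OF l1] by simp
  have cq: "star_dist (fst (q a0)) (fst (q b0)) - snd (q a0) - snd (q b0) \<le> real_of_int (2 * d1 e0)"
    using potq1 e0E e0ab(1) unfolding is_potential_def by blast
  have cp: "star_dist (fst (p a0)) (fst (p b0)) - snd (p a0) - snd (p b0) \<le> real_of_int (2 * d e0)"
    using potp e0E e0ab(1) unfolding is_potential_def by blast
  have qa0: "q a0 = gpt (A a0) (B a0) (UQ a0) (WQ a0)" "q b0 = gpt (A b0) (B b0) (UQ b0) (WQ b0)"
    using repq e0ab(3,4) by auto
  have pa0: "p a0 = gpt (A a0) (B a0) (UP a0) (WP a0)" "p b0 = gpt (A b0) (B b0) (UP b0) (WP b0)"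
    using repp e0ab(3,4) by auto
  have cq': "star_dist (fst (gpt (A a0) (B a0) (UQ a0) (WQ a0))) (fst (gpt (A b0) (B b0) (UQ b0) (WQ b0)))
      - snd (gpt (A a0) (B a0) (UQ a0) (WQ a0)) - snd (gpt (A b0) (B b0) (UQ b0) (WQ b0)) \<le> real_of_int (\<beta> - 2)"
    using cq unfolding qa0 d1e0 .
  have cp': "star_dist (fst (gpt (A a0) (B a0) (UP a0) (WP a0))) (fst (gpt (A b0) (B b0) (UP b0) (WP b0)))
      - snd (gpt (A a0) (B a0) (UP a0) (WP a0)) - snd (gpt (A b0) (B b0) (UP b0) (WP b0)) \<le> real_of_int \<beta>"
    using cp unfolding pa0 \<beta>_def[symmetric] .
  have fq: "\<forall>e1 e2. rayof (A a0) (B a0) e1 \<noteq> rayof (A b0) (B b0) e2 \<longrightarrow>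
      om e1 (UQ a0) (WQ a0) + om e2 (UQ b0) (WQ b0) \<le> \<beta> - 2"
    using Qx.cons_forms[OF e0ab(3,4), THEN iffD1, OF cq'] .
  have fp: "\<forall>e1 e2. rayof (A a0) (B a0) e1 \<noteq> rayof (A b0) (B b0) e2 \<longrightarrow>
      om e1 (UP a0) (WP a0) + om e2 (UP b0) (WP b0) \<le> \<beta>"
    using Qx.cons_forms[OF e0ab(3,4), THEN iffD1, OF cp'] .
  have omb: "\<bar>om e (UQ i) (WQ i) - om e (UP i) (WP i)\<bar> \<le> m" if "i \<in> {1..n}" for e i
    using mb[OF that] by (cases e) (simp_all add: om_def abs_minus_commute)
  have omr: "(om e (UQ i) (WQ i) = om e' (UQ i) (WQ i) \<and> om e (UP i) (WP i) = om e' (UP i) (WP i))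
      \<or> om e (UQ i) (WQ i) + om e' (UQ i) (WQ i) \<le> 0" if "i \<in> {1..n}" for e e' i
    using Qx.yO[OF that] by (cases e; cases e') (simp_all add: om_def)
  have good_some: "good 1 \<or> good m"
  proof (rule ccontr)
    assume "\<not> (good 1 \<or> good m)"
    then have n1: "\<not> good 1" and nm: "\<not> good m" by auto
    have g1: "\<not> (\<forall>e1 e2. rayof (A a0) (B a0) e1 \<noteq> rayof (A b0) (B b0) e2 \<longrightarrow>
      exq 1 (om e1 (UQ a0) (WQ a0)) (om e1 (UP a0) (WP a0)) + exq 1 (om e2 (UQ b0) (WQ b0)) (om e2 (UP b0) (WP b0))
        \<le> \<beta> - 2)" using n1 goodf[of 1] by simp
    have gm: "\<not> (\<forall>e1 e2. rayof (A a0) (B a0) e1 \<noteq> rayof (A b0) (B b0) e2 \<longrightarrow>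
      exq m (om e1 (UQ a0) (WQ a0)) (om e1 (UP a0) (WP a0)) + exq m (om e2 (UQ b0) (WQ b0)) (om e2 (UP b0) (WP b0))
        \<le> \<beta> - 2)" using nm goodf[of m] m3 by simp
    obtain e1 e1' where E1: "rayof (A a0) (B a0) e1 \<noteq> rayof (A b0) (B b0) e1'"
      "exq 1 (om e1 (UQ a0) (WQ a0)) (om e1 (UP a0) (WP a0)) + exq 1 (om e1' (UQ b0) (WQ b0)) (om e1' (UP b0) (WP b0))
        > \<beta> - 2"
      using g1 not_le by blast
    obtain e2 e2' where E2: "rayof (A a0) (B a0) e2 \<noteq> rayof (A b0) (B b0) e2'"
      "exq m (om e2 (UQ a0) (WQ a0)) (om e2 (UP a0) (WP a0)) + exq m (om e2' (UQ b0) (WQ b0)) (om e2' (UP b0) (WP b0))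
        > \<beta> - 2"
      using gm not_le by blast
    show False
      apply (rule oneD_e0[OF m3 b4 E1(2) _ _ E2(2)])
      using fq fp E1(1) E2(1) omb[OF e0ab(3)] omb[OF e0ab(4)] omr[OF e0ab(3)] omr[OF e0ab(4)] by auto
  qed
  define l0 where "l0 = (if good m then m else 1)"
  have l01: "1 \<le> l0" "l0 \<le> m" "good l0" using good_some m3 unfolding l0_def by auto
  define q' where "q' = Qx.newO l0"
  define p' where "p' = Px.newO l0"
  have gvq': "grid_vec n k q'" unfolding q'_def by (rule Qx.new_grid)
  have gvp': "grid_vec n k p'" unfolding p'_def by (rule Px.new_grid)
  have potp': "is_potential n k E d M p'"
    unfolding p'_def by (rule Px.new_pot[OF l01(1)]) (simp add: d1_def)
  have potq': "is_potential n k E d1 M q'"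
  proof -
    have "star_dist (fst (q' i)) (fst (q' j)) - snd (q' i) - snd (q' j) \<le> real_of_int (2 * d1 {i, j})"
      if ij: "{i, j} \<in> E" for i j
    proof (cases "{i, j} = e0")
      case True
      then have "(i = a0 \<and> j = b0) \<or> (i = b0 \<and> j = a0)" using e0ab(1) by (metis doubleton_eq_iff)
      moreover have "star_dist (fst (q' a0)) (fst (q' b0)) - snd (q' a0) - snd (q' b0) \<le> real_of_int (2 * d1 e0)"
        using l01(3) unfolding good_def q'_def .
      ultimately show ?thesis using True star_dist_comm[of "fst (q' a0)" "fst (q' b0)"]
        by (auto simp: insert_commute)
    next
      case False
      then have "d1 {i, j} = d {i, j}" unfolding d1_def by simp
      then show ?thesis using Qx.new_edge[OF l01(1) ij] unfolding q'_def by simp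
    qed
    then show ?thesis unfolding is_potential_def q'_def
      using Qx.term_eq[OF l01(1)] Qx.new_box[OF l01(1)] unfolding q'_def by blast
  qed
  have ysum: "snd (q' i) + snd (p' i) = snd (q i) + snd (p i)" if "i \<in> {1..n}" for i
  proof -
    have "snd (q' i) + snd (p' i) = real_of_int ((exq l0 (UQ i) (UP i) - exq l0 (WQ i) (WP i))
        + (exq l0 (UP i) (UQ i) - exq l0 (WP i) (WQ i))) / 2"
      unfolding q'_def p'_def Qx.newO_in[OF that] Px.newO_in[OF that] gpt_def by (simp add: field_simps)
    also have "\<dots> = real_of_int ((UQ i - WQ i) + (UP i - WP i)) / 2"
      using exq_cost[OF l01(1)] by simp
    also have "\<dots> = snd (q i) + snd (p i)"
      using repq repp that unfolding gpt_def by (simp add: field_simps)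
    finally show ?thesis .
  qed
  have costsum: "cost n k c q' + cost n k c p' = cost n k c q + cost n k c p"
  proof -
    have "cost n k c q' + cost n k c p' = (\<Sum>i\<in>{1..n} - {1..k}. real_of_int (c i) * (snd (q' i) + snd (p' i)))"
      unfolding cost_def by (simp add: sum.distrib distrib_left)
    also have "\<dots> = (\<Sum>i\<in>{1..n} - {1..k}. real_of_int (c i) * (snd (q i) + snd (p i)))"
      using ysum by (intro sum.cong) auto
    also have "\<dots> = cost n k c q + cost n k c p"
      unfolding cost_def by (simp add: sum.distrib distrib_left)
    finally show ?thesis .
  qed
  have "h_fun n k E c d M p \<le> h_fun n k E c d M p'" using p_min gvp' unfolding is_minimizer_def by blast
  then have cpp: "cost n k c p \<le> cost n k c p'" using h_pot[OF potp] h_pot[OF potp'] by simp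
  have cqq: "cost n k c q' \<le> cost n k c q" using costsum cpp by linarith
  have qmin': "is_minimizer n k E c d1 M q'"
    unfolding is_minimizer_def
  proof (intro conjI allI impI)
    show "grid_vec n k q'" by (rule gvq')
    fix r assume r: "grid_vec n k r"
    have "h_fun n k E c d1 M q' \<le> h_fun n k E c d1 M q"
      using h_pot[OF potq'] h_pot[OF potq1] cqq by simp
    also have "\<dots> \<le> h_fun n k E c d1 M r" using q_min r unfolding is_minimizer_def d1_def by blast
    finally show "h_fun n k E c d1 M q' \<le> h_fun n k E c d1 M r" .
  qed
  have nd: "grid_norm (p i) (q' i) \<le> grid_norm (p i) (q i)" if "i \<in> {1..n}" for i
  proof -
    have "grid_norm (p i) (q' i) = real_of_int (max \<bar>exq l0 (UQ i) (UP i) - UP i\<bar> \<bar>exq l0 (WQ i) (WP i) - WP i\<bar>)"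
      using Qx.new_norm[OF that] unfolding q'_def by (simp add: abs_minus_commute)
    moreover have "grid_norm (p i) (q i) = real_of_int (max \<bar>UQ i - UP i\<bar> \<bar>WQ i - WP i\<bar>)"
      using onorm[OF that] by (simp add: abs_minus_commute)
    ultimately show ?thesis using node_dec[OF l01(1), of "UQ i" "UP i" "WQ i" "WP i"] by simp
  qed
  have nd0: "grid_norm (p i0) (q' i0) \<le> grid_norm (p i0) (q i0) - 1"
  proof -
    have "grid_norm (p i0) (q' i0) = real_of_int (max \<bar>exq l0 (UQ i0) (UP i0) - UP i0\<bar> \<bar>exq l0 (WQ i0) (WP i0) - WP i0\<bar>)"
      using Qx.new_norm[OF i0(1)] unfolding q'_def by (simp add: abs_minus_commute)
    moreover have "grid_norm (p i0) (q i0) = real_of_int (max \<bar>UQ i0 - UP i0\<bar> \<bar>WQ i0 - WP i0\<bar>)"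
      using onorm[OF i0(1)] by (simp add: abs_minus_commute)
    moreover have "l0 \<le> max \<bar>UQ i0 - UP i0\<bar> \<bar>WQ i0 - WP i0\<bar>" using l01(2) m_def by (simp add: abs_minus_commute)
    then have "max \<bar>exq l0 (UQ i0) (UP i0) - UP i0\<bar> \<bar>exq l0 (WQ i0) (WP i0) - WP i0\<bar>
       \<le> max \<bar>UQ i0 - UP i0\<bar> \<bar>WQ i0 - WP i0\<bar> - 1"
      using node_dec[OF l01(1), of "UQ i0" "UP i0" "WQ i0" "WP i0"] by blast
    then have "real_of_int (max \<bar>exq l0 (UQ i0) (UP i0) - UP i0\<bar> \<bar>exq l0 (WQ i0) (WP i0) - WP i0\<bar>)
       \<le> real_of_int (max \<bar>UQ i0 - UP i0\<bar> \<bar>WQ i0 - WP i0\<bar> - 1)"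
      by (simp only: of_int_le_iff)
    ultimately show ?thesis by simp
  qed
  have "(\<Sum>i\<in>{1..n}. grid_norm (p i) (q' i)) = grid_norm (p i0) (q' i0) + (\<Sum>i\<in>{1..n} - {i0}. grid_norm (p i) (q' i))"
    using i0(1) by (simp add: sum.remove)
  also have "\<dots> \<le> (grid_norm (p i0) (q i0) - 1) + (\<Sum>i\<in>{1..n} - {i0}. grid_norm (p i) (q i))"
    using nd0 nd by (intro add_mono sum_mono) auto
  also have "\<dots> = (\<Sum>i\<in>{1..n}. grid_norm (p i) (q i)) - 1"
    using i0(1) by (simp add: sum.remove)
  finally show ?thesis using qmin' unfolding d1_def by blast
qed


lemma pot_exists:
  fixes n k :: nat and E :: "nat set set" and d' :: "nat set \<Rightarrow> int" and M :: int
  assumes kn: "k \<le> n" and k1: "1 \<le> k" and M_pos: "M > 0"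
    and E_simple: "\<forall>e\<in>E. \<exists>i j. e = {i, j} \<and> i \<noteq> j \<and> i \<in> {1..n} \<and> j \<in> {1..n}"
    and no_term_edge: "\<forall>e\<in>E. \<not> e \<subseteq> {1..k}"
    and dnn: "\<forall>e\<in>E. d' e \<ge> 0"
  shows "\<exists>r. grid_vec n k r \<and> is_potential n k E d' M r"
proof -
  define r where "r i = (if i \<in> {1..k} then ((real_of_int M, i), 0)
     else if i \<in> {1..n} then (star_origin, real_of_int M) else (star_origin, 0))" for i
  have o1: "in_star k star_origin" using k1 unfolding in_star_def star_origin_def by auto
  have do: "star_dist star_origin star_origin = 0" unfolding star_dist_def star_origin_def by simp
  have dt: "star_dist star_origin (real_of_int M, s) = real_of_int M" for s
    using M_pos unfolding star_dist_def star_origin_def by auto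
  have dt2: "star_dist (real_of_int M, s) star_origin = real_of_int M" for s
    using M_pos unfolding star_dist_def star_origin_def by auto
  have grid: "grid_vec n k r"
    unfolding grid_vec_def
  proof (intro conjI ballI allI impI)
    fix i assume i: "i \<in> {1..n}"
    show "in_grid k (r i)"
    proof (cases "i \<in> {1..k}")
      case True
      have "in_star k (real_of_int M, i)" using True M_pos unfolding in_star_def by auto
      then show ?thesis using True dt unfolding r_def in_grid_def integral_real_def by simp
    next
      case False
      then show ?thesis using i o1 do unfolding r_def in_grid_def integral_real_def by simp
    qed
  next
    fix i assume "i \<notin> {1..n}"
    then show "r i = (star_origin, 0)" using kn unfolding r_def by auto
  qed
  have pot: "is_potential n k E d' M r"
    unfolding is_potential_def
  proof (intro conjI allI impI ballI)
    fix i j assume ij: "{i, j} \<in> E"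
    obtain i0 j0 where e: "{i, j} = {i0, j0}" "i0 \<in> {1..n}" "j0 \<in> {1..n}" using E_simple ij by blast
    have inn: "i \<in> {1..n}" "j \<in> {1..n}" using e by (metis doubleton_eq_iff)+
    have nt: "\<not> (i \<in> {1..k} \<and> j \<in> {1..k})" using no_term_edge ij by auto
    have dd: "0 \<le> d' {i, j}" using dnn ij by blast
    show "star_dist (fst (r i)) (fst (r j)) - snd (r i) - snd (r j) \<le> real_of_int (2 * d' {i, j})"
    proof (cases "i \<in> {1..k}")
      case True
      then have "j \<notin> {1..k}" using nt by blast
      then show ?thesis using True inn dd dt2 unfolding r_def by simp
    next
      case False
      show ?thesis
      proof (cases "j \<in> {1..k}")
        case True
        then show ?thesis using False inn dd dt unfolding r_def by simp
      next
        case False2: False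
        then show ?thesis using False inn dd do M_pos unfolding r_def by simp
      qed
    qed
  next
    fix s assume "s \<in> {1..k}"
    then show "r s = ((real_of_int M, s), 0)" unfolding r_def by simp
  next
    fix i assume i: "i \<in> {1..n}"
    show "0 \<le> snd (r i)" using M_pos unfolding r_def by simp
    show "star_dist star_origin (fst (r i)) \<le> real_of_int M"
      using dt do M_pos unfolding r_def by simp
  qed
  show ?thesis using grid pot by blast
qed

lemma min_pot:
  assumes "is_minimizer n k E c d' M q" "grid_vec n k r" "is_potential n k E d' M r"
  shows "is_potential n k E d' M q"
proof (rule ccontr)
  assume "\<not> is_potential n k E d' M q"
  then have "h_fun n k E c d' M q = \<infinity>" unfolding h_fun_def by simp
  moreover have "h_fun n k E c d' M q \<le> h_fun n k E c d' M r" using assms(1,2) unfolding is_minimizer_def by blast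
  moreover have "h_fun n k E c d' M r = ereal (cost n k c r)" using h_pot[OF assms(3)] .
  ultimately show False by simp
qed

lemma cost_int:
  assumes "grid_vec n k r" "is_potential n k E d' M r" "\<forall>i\<in>{1..n} - {1..k}. c i \<ge> 0"
  shows "2 * cost n k c r \<in> \<int> \<and> cost n k c r \<ge> 0"
proof -
  have y2: "2 * snd (r i) \<in> \<int>" if "i \<in> {1..n}" for i
  proof -
    have "in_grid k (r i)" using assms(1) that unfolding grid_vec_def by blast
    then have h: "fst (fst (r i)) + snd (r i) \<in> \<int>" "fst (fst (r i)) - snd (r i) \<in> \<int>"
      using in_grid_int by blast+
    have "2 * snd (r i) = (fst (fst (r i)) + snd (r i)) - (fst (fst (r i)) - snd (r i))" by simp
    then show ?thesis using h by (metis Ints_diff)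
  qed
  have "2 * cost n k c r = (\<Sum>i\<in>{1..n} - {1..k}. real_of_int (c i) * (2 * snd (r i)))"
    unfolding cost_def by (simp add: sum_distrib_left mult.left_commute)
  also have "\<dots> \<in> \<int>"
  proof (rule Ints_sum)
    fix i assume "i \<in> {1..n} - {1..k}"
    then have "2 * snd (r i) \<in> \<int>" using y2 by blast
    then show "real_of_int (c i) * (2 * snd (r i)) \<in> \<int>" by (rule Ints_mult[OF Ints_of_int])
  qed
  finally have i: "2 * cost n k c r \<in> \<int>" .
  have "cost n k c r \<ge> 0" unfolding cost_def
    using assms(2,3) unfolding is_potential_def by (intro sum_nonneg) auto
  then show ?thesis using i by blast
qed

lemma min_exists:
  assumes "\<exists>r. grid_vec n k r \<and> is_potential n k E d' M r" "\<forall>i\<in>{1..n} - {1..k}. c i \<ge> 0"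
  shows "\<exists>q. is_minimizer n k E c d' M q"
proof -
  define P where "P r \<longleftrightarrow> grid_vec n k r \<and> is_potential n k E d' M r" for r
  define f where "f r = nat \<lfloor>2 * cost n k c r\<rfloor>" for r
  obtain r0 where "P r0" using assms(1) unfolding P_def by blast
  then obtain q where q: "P q" "\<forall>r. P r \<longrightarrow> f q \<le> f r" using ex_has_least_nat[of P r0 f] by blast
  have fe: "real (f r) = 2 * cost n k c r" if "P r" for r
  proof -
    have h: "2 * cost n k c r \<in> \<int> \<and> cost n k c r \<ge> 0" using cost_int assms(2) that unfolding P_def by blast
    then obtain z :: int where z: "2 * cost n k c r = of_int z" by (metis Ints_cases)
    then have "z \<ge> 0" using h by linarith
    then show ?thesis unfolding f_def using z by simp
  qed
  have "is_minimizer n k E c d' M q"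
    unfolding is_minimizer_def
  proof (intro conjI allI impI)
    show "grid_vec n k q" using q(1) unfolding P_def by blast
    fix r assume r: "grid_vec n k r"
    show "h_fun n k E c d' M q \<le> h_fun n k E c d' M r"
    proof (cases "is_potential n k E d' M r")
      case True
      then have "P r" using r unfolding P_def by blast
      then have "real (f q) \<le> real (f r)" using q(2) by simp
      then have "cost n k c q \<le> cost n k c r" using fe[OF q(1)] fe[OF \<open>P r\<close>] by simp
      then show ?thesis using h_pot[OF True] h_pot[of n k E d' M q c] q(1) unfolding P_def by simp
    next
      case False
      then show ?thesis unfolding h_fun_def by simp
    qed
  qed
  then show ?thesis by blast
qed

lemma star_dist_nonneg: "in_star k x \<Longrightarrow> in_star k y \<Longrightarrow> star_dist x y \<ge> 0"
  unfolding in_star_def star_dist_def by auto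


theorem theorem3p12:
  fixes n k :: nat and E :: "nat set set" and c :: "nat \<Rightarrow> int" and d :: "nat set \<Rightarrow> int"
    and M :: int and e0 :: "nat set" and p :: "nat \<Rightarrow> grid_pt"
  assumes k3: "3 \<le> k" and kn: "k \<le> n"
    and E_simple: "\<forall>e\<in>E. \<exists>i j. e = {i, j} \<and> i \<noteq> j \<and> i \<in> {1..n} \<and> j \<in> {1..n}"
    and no_term_edge: "\<forall>e\<in>E. \<not> e \<subseteq> {1..k}"
    and c_nonneg: "\<forall>i\<in>{1..n} - {1..k}. c i \<ge> 0"
    and d_pos: "\<forall>e\<in>E. d e > 0"
    and M_pos: "M > 0"
    and e0E: "e0 \<in> E" and e0_even: "even (d e0)"
    and p_min: "is_minimizer n k E c d M p"
  shows "\<exists>q. is_minimizer n k E c (d(e0 := d e0 - 1)) M q \<and> vec_norm n p q \<le> 2"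
proof -
  define d1 where "d1 = d(e0 := d e0 - 1)"
  have k1: "1 \<le> k" using k3 by simp
  have de0: "d e0 \<ge> 2" using d_pos e0E e0_even by fastforce
  have dnn: "\<forall>e\<in>E. d e \<ge> 0" using d_pos by fastforce
  have d1nn: "\<forall>e\<in>E. d1 e \<ge> 0" using d_pos de0 unfolding d1_def by fastforce
  obtain r where r: "grid_vec n k r" "is_potential n k E d M r"
    using pot_exists[OF kn k1 M_pos E_simple no_term_edge dnn] by blast
  obtain r1 where r1: "grid_vec n k r1" "is_potential n k E d1 M r1"
    using pot_exists[OF kn k1 M_pos E_simple no_term_edge d1nn] by blast
  have potp: "is_potential n k E d M p" using min_pot[OF p_min r] .
  have gvp: "grid_vec n k p" using p_min unfolding is_minimizer_def by blast
  define \<Phi> where "\<Phi> q = (\<Sum>i\<in>{1..n}. grid_norm (p i) (q i))" for q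
  have \<Phi>nn: "\<Phi> q \<ge> 0" if "grid_vec n k q" for q
    unfolding \<Phi>_def grid_norm_def
  proof (rule sum_nonneg)
    fix i assume i: "i \<in> {1..n}"
    have "in_star k (fst (p i))" "in_star k (fst (q i))"
      using gvp that i unfolding grid_vec_def in_grid_def by auto
    then show "0 \<le> star_dist (fst (p i)) (fst (q i)) + \<bar>snd (p i) - snd (q i)\<bar>"
      using star_dist_nonneg by fastforce
  qed
  have main: "\<forall>q. is_minimizer n k E c d1 M q \<and> \<Phi> q \<le> real N \<longrightarrow>
      (\<exists>q'. is_minimizer n k E c d1 M q' \<and> vec_norm n p q' \<le> 2)" for N :: nat
  proof (induction N)
    case 0
    show ?case
    proof (intro allI impI)
      fix q assume q: "is_minimizer n k E c d1 M q \<and> \<Phi> q \<le> real 0"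
      show "\<exists>q'. is_minimizer n k E c d1 M q' \<and> vec_norm n p q' \<le> 2"
      proof (cases "vec_norm n p q \<le> 2")
        case True then show ?thesis using q by blast
      next
        case False
        have potq: "is_potential n k E d1 M q" using min_pot q r1 by blast
        obtain q' where q': "is_minimizer n k E c d1 M q'" "\<Phi> q' \<le> \<Phi> q - 1"
          using step[OF k3 kn E_simple d_pos e0E e0_even p_min potp, of q] q potq False
          unfolding d1_def \<Phi>_def by auto
        have "\<Phi> q' \<ge> 0" using \<Phi>nn q'(1) unfolding is_minimizer_def by blast
        then show ?thesis using q q'(2) by simp
      qed
    qed
  next
    case (Suc N)
    show ?case
    proof (intro allI impI)
      fix q assume q: "is_minimizer n k E c d1 M q \<and> \<Phi> q \<le> real (Suc N)"
      show "\<exists>q'. is_minimizer n k E c d1 M q' \<and> vec_norm n p q' \<le> 2"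
      proof (cases "vec_norm n p q \<le> 2")
        case True then show ?thesis using q by blast
      next
        case False
        have potq: "is_potential n k E d1 M q" using min_pot q r1 by blast
        obtain q' where q': "is_minimizer n k E c d1 M q'" "\<Phi> q' \<le> \<Phi> q - 1"
          using step[OF k3 kn E_simple d_pos e0E e0_even p_min potp, of q] q potq False
          unfolding d1_def \<Phi>_def by auto
        have "\<Phi> q' \<le> real N" using q q'(2) by simp
        then show ?thesis using Suc.IH q'(1) by blast
      qed
    qed
  qed
  obtain q0 where q0: "is_minimizer n k E c d1 M q0"
    using min_exists[of n k E d1 M c] r1 c_nonneg by blast
  have "\<Phi> q0 \<le> real (nat \<lceil>\<Phi> q0\<rceil>)" by linarith
  then show ?thesis using main[of "nat \<lceil>\<Phi> q0\<rceil>"] q0 unfolding d1_def by blast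
qed

end
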